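(* Let $\varepsilon>0$, $u_0\in\mathcal V_{[0,1]}\setminus\{\mathbf 0,\mathbf 1\}$, and let $\tau_n\downarrow0$ with $\tau_n<\varepsilon$ be such that for every $t\ge0$ the limit $\hat u(t):=\lim_{n\to\infty}u^{[\tau_n]}_{\lceil t/\tau_n\rceil}$ exists and $\hat u$ is (together with some $\gamma$) a solution of mass-conserving double-obstacle AC flow on $[0,\infty)$ with $\hat u(0)=u_0$. Then $\hat u\in C^{0,1}([0,\infty);\mathcal V)$, i.e. $\hat u$ is Lipschitz continuous on $[0,\infty)$.
   Context: $G=(V,E)$ is a finite, simple, connected, undirected graph with weights $\omega_{ij}=\omega_{ji}>0$ for $ij\in E$, $\omega_{ij}=0$ otherwise; $d_i=\sum_j\omega_{ij}$, $r\in[0,1]$ fixed. $\mathcal V$ = functions $V\to\mathbb R$ with $\langle u,v\rangle_{\mathcal V}=\sum_i u_iv_id_i^r$ and norm $\|\cdot\|_{\mathcal V}$; $\mathcal V_{[0,1]}$ = functions $V\to[0,1]$. $(\Delta u)_i=d_i^{-r}\sum_j\omega_{ij}(u_i-u_j)$, $e^{-\tau\Delta}$ its matrix exponential. $\mathbf 1$ all-ones, $\mathbf 0$ zero function; $\mathcal M(u)=\langle u,\mathbf 1\rangle_{\mathcal V}$; $\bar v=\mathcal M(v)/\mathcal M(\mathbf 1)$. For $u\in\mathcal V_{[0,1]}$, $\mathcal B(u)$ = set of $\beta\in\mathcal V$ with $\beta_i\ge0$ if $u_i=0$, $\beta_i=0$ if $0<u_i<1$, $\beta_i\le0$ if $u_i=1$.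 Semi-discrete iterates with time step $\tau$, $\lambda=\tau/\varepsilon$ and initial state $u_0$: $u^{[\tau]}_0=u_0$ and for $m\ge0$, some $\beta^{[\tau]}_{m+1}\in\mathcal B(u^{[\tau]}_{m+1})$ with $u^{[\tau]}_{m+1} -e^{-\tau\Delta}u^{[\tau]}_m-\lambda u^{[\tau]}_{m+1}+\lambda\overline{u^{[\tau]}_{m+1}}\mathbf{1} =\lambda\beta^{[\tau]}_{m+1} -\lambda\overline{\beta^{[\tau]}_{m+1}}\mathbf{1}$. A pair $(u,\beta)$ is a solution to mass-conserving double-obstacle AC flow on $[0,\infty)$ if $u\in H^1_{loc}\cap C^0$, $u(t)\in\mathcal V_{[0,1]}$, and for a.e. $t$: $\varepsilon \frac{du}{dt} + \varepsilon\Delta u-u+\bar u\mathbf{1} = \beta - \bar\beta\mathbf{1}$, $\beta(t)\in\mathcal B(u(t))$. *)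

theory Defs
  imports "HOL-Analysis.Analysis"
begin

definition weighted_graph :: "('n::finite \<Rightarrow> 'n \<Rightarrow> real) \<Rightarrow> bool" where
  "weighted_graph w \<longleftrightarrow>
     (\<forall>i j. w i j = w j i) \<and> (\<forall>i j. 0 \<le> w i j) \<and> (\<forall>i. w i i = 0) \<and>
     (\<forall>i j. (\<lambda>a b. 0 < w a b)\<^sup>*\<^sup>* i j)"

definition deg :: "('n::finite \<Rightarrow> 'n \<Rightarrow> real) \<Rightarrow> 'n \<Rightarrow> real" where
  "deg w i = (\<Sum>j\<in>UNIV. w i j)"

definition innerV :: "('n::finite \<Rightarrow> 'n \<Rightarrow> real) \<Rightarrow> real \<Rightarrow> real^'n \<Rightarrow> real^'n \<Rightarrow> real" where
  "innerV w r u v = (\<Sum>i\<in>UNIV. u$i * v$i * deg w i powr r)"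

definition normV :: "('n::finite \<Rightarrow> 'n \<Rightarrow> real) \<Rightarrow> real \<Rightarrow> real^'n \<Rightarrow> real" where
  "normV w r u = sqrt (innerV w r u u)"

definition mass :: "('n::finite \<Rightarrow> 'n \<Rightarrow> real) \<Rightarrow> real \<Rightarrow> real^'n \<Rightarrow> real" where
  "mass w r u = innerV w r u (\<chi> i. 1)"

definition avg :: "('n::finite \<Rightarrow> 'n \<Rightarrow> real) \<Rightarrow> real \<Rightarrow> real^'n \<Rightarrow> real" where
  "avg w r v = mass w r v / mass w r (\<chi> i. 1)"

definition V01 :: "(real^'n::finite) set" where
  "V01 = {u. \<forall>i. 0 \<le> u$i \<and> u$i \<le> 1}"

definition graph_laplacian :: "('n::finite \<Rightarrow> 'n \<Rightarrow> real) \<Rightarrow> real \<Rightarrow> real^'n \<Rightarrow> real^'n" where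
  "graph_laplacian w r u = (\<chi> i. (\<Sum>j\<in>UNIV. w i j * (u$i - u$j)) / deg w i powr r)"

definition heat :: "('n::finite \<Rightarrow> 'n \<Rightarrow> real) \<Rightarrow> real \<Rightarrow> real \<Rightarrow> real^'n \<Rightarrow> real^'n" where
  "heat w r \<tau> u = (\<Sum>k. ((- \<tau>) ^ k / fact k) *\<^sub>R ((graph_laplacian w r ^^ k) u))"

definition obstB :: "(real^'n::finite) \<Rightarrow> (real^'n) set" where
  "obstB u = {\<beta>. \<forall>i. (u$i = 0 \<longrightarrow> \<beta>$i \<ge> 0) \<and> (0 < u$i \<and> u$i < 1 \<longrightarrow> \<beta>$i = 0)
                     \<and> (u$i = 1 \<longrightarrow> \<beta>$i \<le> 0)}"

definition semi_discrete_iterates ::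
  "('n::finite \<Rightarrow> 'n \<Rightarrow> real) \<Rightarrow> real \<Rightarrow> real \<Rightarrow> real \<Rightarrow> real^'n \<Rightarrow> (nat \<Rightarrow> real^'n) \<Rightarrow> bool" where
  "semi_discrete_iterates w r \<epsilon> \<tau> u0 U \<longleftrightarrow>
     U 0 = u0 \<and>
     (\<forall>m. U (Suc m) \<in> V01 \<and>
        (\<exists>\<beta>\<in>obstB (U (Suc m)).
           U (Suc m) - heat w r \<tau> (U m) - (\<tau>/\<epsilon>) *\<^sub>R U (Suc m)
             + ((\<tau>/\<epsilon>) * avg w r (U (Suc m))) *\<^sub>R (\<chi> i. 1)
           = (\<tau>/\<epsilon>) *\<^sub>R \<beta> - ((\<tau>/\<epsilon>) * avg w r \<beta>) *\<^sub>R (\<chi> i. 1)))"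

text \<open>(u, beta) solves mass-conserving double-obstacle AC flow on [0,inf):
  u continuous, in H^1_loc (absolutely continuous with a locally square-integrable
  derivative u'), values in V01, and the equation holds for a.e. t \<ge> 0.\<close>
definition mc_ac_solution ::
  "('n::finite \<Rightarrow> 'n \<Rightarrow> real) \<Rightarrow> real \<Rightarrow> real \<Rightarrow> (real \<Rightarrow> real^'n) \<Rightarrow> (real \<Rightarrow> real^'n) \<Rightarrow> bool" where
  "mc_ac_solution w r \<epsilon> u \<beta> \<longleftrightarrow>
     continuous_on {0..} u \<and> (\<forall>t\<ge>0. u t \<in> V01) \<and>
     (\<exists>u'. (\<forall>T\<ge>0. set_integrable lborel {0..T} u' \<and>
                   set_integrable lborel {0..T} (\<lambda>t. (norm (u' t))\<^sup>2)) \<and>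
           (\<forall>t\<ge>0. u t = u 0 + set_lebesgue_integral lborel {0..t} u') \<and>
           (AE t in lborel. t \<ge> 0 \<longrightarrow>
               \<epsilon> *\<^sub>R u' t + \<epsilon> *\<^sub>R graph_laplacian w r (u t) - u t + avg w r (u t) *\<^sub>R (\<chi> i. 1)
                 = \<beta> t - avg w r (\<beta> t) *\<^sub>R (\<chi> i. 1)
               \<and> \<beta> t \<in> obstB (u t)))"

end

theory Submission
  imports Defs
begin

lemma taylor_bound:
  fixes \<psi> \<psi>' :: "real \<Rightarrow> real"
  assumes d: "\<And>x. (\<psi> has_real_derivative \<psi>' x) (at x)"
    and lip: "\<And>x y. x \<in> {0..1} \<Longrightarrow> y \<in> {0..1} \<Longrightarrow> \<bar>\<psi>' x - \<psi>' y\<bar> \<le> L * \<bar>x - y\<bar>"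
    and p: "p \<in> {0..1}" and q: "q \<in> {0..1}"
  shows "\<bar>\<psi> q - \<psi> p - \<psi>' p * (q - p)\<bar> \<le> L * \<bar>q - p\<bar> * \<bar>q - p\<bar>"
proof (cases "p < q")
  case True
  obtain z where z: "p < z" "z < q" "\<psi> q - \<psi> p = (q - p) * \<psi>' z"
    using MVT2[OF True, of \<psi> \<psi>'] d by blast
  have zi: "z \<in> {0..1}" using z p q by auto
  have "\<bar>\<psi> q - \<psi> p - \<psi>' p * (q - p)\<bar> = \<bar>q - p\<bar> * \<bar>\<psi>' z - \<psi>' p\<bar>"
    by (simp add: z(3) abs_mult[symmetric] algebra_simps)
  also have "\<dots> \<le> \<bar>q - p\<bar> * (L * \<bar>z - p\<bar>)"
    by (rule mult_left_mono[OF lip[OF zi p]]) simp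
  also have "\<dots> \<le> \<bar>q - p\<bar> * (L * \<bar>q - p\<bar>)"
  proof -
    have "0 \<le> L * \<bar>z - p\<bar>" using lip[OF zi p] by linarith
    then have L0: "0 \<le> L" using z by (simp add: zero_le_mult_iff)
    show ?thesis using z L0 by (intro mult_left_mono mult_left_mono) auto
  qed
  finally show ?thesis by (simp add: algebra_simps)
next
  case False
  show ?thesis
  proof (cases "p = q")
    case True then show ?thesis by simp
  next
    case False
    with \<open>\<not> p < q\<close> have qp: "q < p" by simp
    obtain z where z: "q < z" "z < p" "\<psi> p - \<psi> q = (p - q) * \<psi>' z"
      using MVT2[OF qp, of \<psi> \<psi>'] d by blast
    have zi: "z \<in> {0..1}" using z p q by auto
    have "\<bar>\<psi> q - \<psi> p - \<psi>' p * (q - p)\<bar> = \<bar>q - p\<bar> * \<bar>\<psi>' z - \<psi>' p\<bar>"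
    proof -
      have "\<psi> q - \<psi> p - \<psi>' p * (q - p) = (q - p) * (\<psi>' z - \<psi>' p)"
        using z(3) by (simp add: algebra_simps)
      then show ?thesis by (simp add: abs_mult)
    qed
    also have "\<dots> \<le> \<bar>q - p\<bar> * (L * \<bar>z - p\<bar>)"
      by (rule mult_left_mono[OF lip[OF zi p]]) simp
    also have "\<dots> \<le> \<bar>q - p\<bar> * (L * \<bar>q - p\<bar>)"
    proof -
      have "0 \<le> L * \<bar>z - p\<bar>" using lip[OF zi p] by linarith
      then have L0: "0 \<le> L" using z by (simp add: zero_le_mult_iff)
      show ?thesis using z L0 by (intro mult_left_mono mult_left_mono) auto
    qed
    finally show ?thesis by (simp add: algebra_simps)
  qed
qed

lemma additive_local_global:
  fixes D W :: "real \<Rightarrow> real \<Rightarrow> real"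
  assumes add: "\<And>x y z. a \<le> x \<Longrightarrow> x \<le> y \<Longrightarrow> y \<le> z \<Longrightarrow> z \<le> b \<Longrightarrow>
                  D x z = D x y + D y z \<and> W x z = W x y + W y z"
    and loc: "\<And>x y. a \<le> x \<Longrightarrow> x \<le> y \<Longrightarrow> y \<le> b \<Longrightarrow> y - x < \<delta> \<Longrightarrow> \<bar>D x y\<bar> \<le> W x y"
    and dpos: "\<delta> > 0"
    and xy: "a \<le> x" "x \<le> y" "y \<le> b"
  shows "\<bar>D x y\<bar> \<le> W x y"
proof -
  have main: "\<forall>x y. a \<le> x \<and> x \<le> y \<and> y \<le> b \<and> y - x \<le> real n * (\<delta>/2) \<longrightarrow> \<bar>D x y\<bar> \<le> W x y" for n
  proof (induction n)
    case 0
    then show ?case using loc dpos by auto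
  next
    case (Suc n)
    show ?case
    proof (intro allI impI)
      fix x y assume H: "a \<le> x \<and> x \<le> y \<and> y \<le> b \<and> y - x \<le> real (Suc n) * (\<delta>/2)"
      show "\<bar>D x y\<bar> \<le> W x y"
      proof (cases "y - x < \<delta>")
        case True then show ?thesis using loc H by auto
      next
        case False
        define z where "z = x + \<delta>/2"
        have z: "x \<le> z" "z \<le> y" using False dpos by (auto simp: z_def)
        have e: "D x y = D x z + D z y" "W x y = W x z + W z y" using add[of x z y] H z by auto
        have 1: "\<bar>D x z\<bar> \<le> W x z" using loc[of x z] H z dpos by (auto simp: z_def)
        have 2: "\<bar>D z y\<bar> \<le> W z y" using Suc.IH H z
          by (auto simp: z_def algebra_simps)
        show ?thesis using e 1 2 by linarith
      qed
    qed
  qed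
  obtain n :: nat where "(y - x) / (\<delta>/2) < real n" using reals_Archimedean2 by blast
  then have "y - x \<le> real n * (\<delta>/2)" using dpos by (simp add: field_simps)
  then show ?thesis using main xy by blast
qed


lemma prod_abs_int:
  fixes h G :: "real \<Rightarrow> real" and \<phi> :: "real \<Rightarrow> real"
  assumes "continuous_on {x..y} \<phi>" "G absolutely_integrable_on {x..y}"
  shows "(\<lambda>t. \<phi> t * G t) absolutely_integrable_on {x..y}"
proof (rule absolutely_integrable_bounded_measurable_product_real)
  show "\<phi> \<in> borel_measurable (lebesgue_on {x..y})"
    using assms(1) by (rule continuous_imp_measurable_on_sets_lebesgue) auto
  show "bounded (\<phi> ` {x..y})"
    using assms(1) by (intro compact_imp_bounded compact_continuous_image) auto
qed (use assms in auto)

lemma chain_rule_ac: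
  fixes h G \<psi> \<psi>' :: "real \<Rightarrow> real"
  assumes ab: "a \<le> b"
    and hc: "continuous_on {a..b} h"
    and G: "G absolutely_integrable_on {a..b}"
    and hG: "\<And>x y. a \<le> x \<Longrightarrow> x \<le> y \<Longrightarrow> y \<le> b \<Longrightarrow> h y - h x = integral {x..y} G"
    and hr: "\<And>t. t \<in> {a..b} \<Longrightarrow> h t \<in> {0..1}"
    and d: "\<And>x. (\<psi> has_real_derivative \<psi>' x) (at x)"
    and lip: "\<And>x y. x \<in> {0..1} \<Longrightarrow> y \<in> {0..1} \<Longrightarrow> \<bar>\<psi>' x - \<psi>' y\<bar> \<le> L * \<bar>x - y\<bar>"
  shows "\<psi> (h b) - \<psi> (h a) = integral {a..b} (\<lambda>t. \<psi>' (h t) * G t)"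
proof -
  have L0: "0 \<le> L" using lip[of 0 1] by auto
  have lipo: "lipschitz_on L {0..1} \<psi>'"
    using lip L0 by (auto simp: lipschitz_on_def dist_real_def)
  have c\<psi>': "continuous_on {0..1} \<psi>'" using lipschitz_on_continuous_on[OF lipo] .
  have cphi: "continuous_on {x..y} (\<lambda>t. \<psi>' (h t))" if "a \<le> x" "y \<le> b" for x y
  proof -
    have "continuous_on {x..y} h" using hc that by (auto intro: continuous_on_subset)
    moreover have "h ` {x..y} \<subseteq> {0..1}" using hr that by auto
    ultimately show ?thesis using continuous_on_compose2[OF c\<psi>'] by blast
  qed
  have Gs: "G absolutely_integrable_on {x..y}" if "a \<le> x" "y \<le> b" for x y
    using absolutely_integrable_on_subinterval[OF G] that by auto
  have PI: "(\<lambda>t. \<psi>' (h t) * G t) integrable_on {x..y}" if "a \<le> x" "y \<le> b" for x y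
    using prod_abs_int[OF cphi[OF that] Gs[OF that]] absolutely_integrable_on_def by blast
  have GI: "G integrable_on {x..y}" "(\<lambda>t. \<bar>G t\<bar>) integrable_on {x..y}" if "a \<le> x" "y \<le> b" for x y
    using Gs[OF that] absolutely_integrable_on_def[of _ G] by auto
  define D where "D x y = \<psi> (h y) - \<psi> (h x) - integral {x..y} (\<lambda>t. \<psi>' (h t) * G t)" for x y
  define W0 where "W0 x y = integral {x..y} (\<lambda>t. \<bar>G t\<bar>)" for x y
  have add: "D x z = D x y + D y z \<and> W0 x z = W0 x y + W0 y z"
    if "a \<le> x" "x \<le> y" "y \<le> z" "z \<le> b" for x y z
  proof -
    have "integral {x..y} (\<lambda>t. \<psi>' (h t) * G t) + integral {y..z} (\<lambda>t. \<psi>' (h t) * G t)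
          = integral {x..z} (\<lambda>t. \<psi>' (h t) * G t)"
      by (rule Henstock_Kurzweil_Integration.integral_combine) (use that PI[of x z] in auto)
    moreover have "integral {x..y} (\<lambda>t. \<bar>G t\<bar>) + integral {y..z} (\<lambda>t. \<bar>G t\<bar>)
          = integral {x..z} (\<lambda>t. \<bar>G t\<bar>)"
      by (rule Henstock_Kurzweil_Integration.integral_combine) (use that GI[of x z] in auto)
    ultimately show ?thesis by (auto simp: D_def W0_def)
  qed
  have W0pos: "0 \<le> W0 x y" if "a \<le> x" "y \<le> b" for x y
    unfolding W0_def using GI(2)[OF that] by (intro integral_nonneg) auto
  have hbound: "\<bar>h y - h x\<bar> \<le> W0 x y" if "a \<le> x" "x \<le> y" "y \<le> b" for x y
  proof -
    have "\<bar>integral {x..y} G\<bar> \<le> W0 x y"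
      unfolding W0_def using integral_norm_bound_integral[OF GI(1) GI(2), of x y] that by auto
    then show ?thesis using hG[OF that] by simp
  qed
  have key: "\<bar>D a b\<bar> \<le> e" if e: "e > 0" for e
  proof -
    define \<eta> where "\<eta> = e / (2 * (L + 1) * (W0 a b + 1))"
    have W0ab: "0 \<le> W0 a b" using W0pos[of a b] by simp
    have \<eta>pos: "\<eta> > 0" using e L0 W0ab by (auto simp: \<eta>_def)
    have "uniformly_continuous_on {a..b} h"
      using compact_uniformly_continuous[OF hc] by auto
    then obtain \<delta> where \<delta>: "\<delta> > 0"
      and uc: "\<And>x x'. x \<in> {a..b} \<Longrightarrow> x' \<in> {a..b} \<Longrightarrow> dist x' x < \<delta> \<Longrightarrow> dist (h x') (h x) < \<eta>"
      unfolding uniformly_continuous_on_def using \<eta>pos by metis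
    have loc: "\<bar>D x y\<bar> \<le> 2 * L * \<eta> * W0 x y"
      if xy: "a \<le> x" "x \<le> y" "y \<le> b" "y - x < \<delta>" for x y
    proof -
      have close: "\<bar>h t - h x\<bar> < \<eta>" if "t \<in> {x..y}" for t
        using uc[of x t] that xy by (auto simp: dist_real_def)
      have hx: "h x \<in> {0..1}" and hy: "h y \<in> {0..1}" using hr xy by auto
      have T1: "\<bar>\<psi> (h y) - \<psi> (h x) - \<psi>' (h x) * (h y - h x)\<bar> \<le> L * \<eta> * W0 x y"
      proof -
        have "\<bar>\<psi> (h y) - \<psi> (h x) - \<psi>' (h x) * (h y - h x)\<bar> \<le> L * \<bar>h y - h x\<bar> * \<bar>h y - h x\<bar>"
          by (rule taylor_bound[OF d lip hx hy])
        also have "\<dots> \<le> L * \<eta> * W0 x y"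
        proof -
          have "\<bar>h y - h x\<bar> \<le> \<eta>" using close[of y] xy by auto
          moreover have "\<bar>h y - h x\<bar> \<le> W0 x y" using hbound xy by auto
          ultimately show ?thesis using L0 \<eta>pos
            by (intro mult_mono mult_left_mono) auto
        qed
        finally show ?thesis .
      qed
      have e1: "\<psi>' (h x) * (h y - h x) = integral {x..y} (\<lambda>t. \<psi>' (h x) * G t)"
        using hG[OF xy(1-3)] by simp
      have I1: "(\<lambda>t. \<psi>' (h x) * G t) integrable_on {x..y}"
        by (intro integrable_on_mult_right) (use GI(1)[of x y] xy in auto)
      have I2: "(\<lambda>t. \<psi>' (h t) * G t) integrable_on {x..y}" using PI[of x y] xy by auto
      have T2: "\<bar>integral {x..y} (\<lambda>t. \<psi>' (h x) * G t) - integral {x..y} (\<lambda>t. \<psi>' (h t) * G t)\<bar>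
                 \<le> L * \<eta> * W0 x y"
      proof -
        have "integral {x..y} (\<lambda>t. \<psi>' (h x) * G t) - integral {x..y} (\<lambda>t. \<psi>' (h t) * G t)
              = integral {x..y} (\<lambda>t. \<psi>' (h x) * G t - \<psi>' (h t) * G t)"
          using Henstock_Kurzweil_Integration.integral_diff[OF I1 I2] by simp
        also have "\<bar>\<dots>\<bar> \<le> integral {x..y} (\<lambda>t. L * \<eta> * \<bar>G t\<bar>)"
        proof -
          have "norm (integral {x..y} (\<lambda>t. \<psi>' (h x) * G t - \<psi>' (h t) * G t))
                \<le> integral {x..y} (\<lambda>t. L * \<eta> * \<bar>G t\<bar>)"
          proof (rule integral_norm_bound_integral)
            show "(\<lambda>t. \<psi>' (h x) * G t - \<psi>' (h t) * G t) integrable_on {x..y}"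
              using Henstock_Kurzweil_Integration.integrable_diff[OF I1 I2] .
            show "(\<lambda>t. L * \<eta> * \<bar>G t\<bar>) integrable_on {x..y}"
              using GI(2)[of x y] xy by (intro integrable_on_mult_right) auto
            fix t assume t: "t \<in> {x..y}"
            have ht: "h t \<in> {0..1}" using hr t xy by auto
            have "norm (\<psi>' (h x) * G t - \<psi>' (h t) * G t) = \<bar>\<psi>' (h x) - \<psi>' (h t)\<bar> * \<bar>G t\<bar>"
              by (simp add: abs_mult[symmetric] algebra_simps)
            also have "\<dots> \<le> (L * \<bar>h x - h t\<bar>) * \<bar>G t\<bar>"
              by (rule mult_right_mono[OF lip[OF hx ht]]) simp
            also have "\<dots> \<le> (L * \<eta>) * \<bar>G t\<bar>"
              using close[OF t] L0 by (intro mult_right_mono mult_left_mono) auto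
            finally show "norm (\<psi>' (h x) * G t - \<psi>' (h t) * G t) \<le> L * \<eta> * \<bar>G t\<bar>" .
          qed
          then show ?thesis by simp
        qed
        also have "\<dots> = L * \<eta> * W0 x y"
          unfolding W0_def by simp
        finally show ?thesis .
      qed
      have "D x y = (\<psi> (h y) - \<psi> (h x) - \<psi>' (h x) * (h y - h x))
          + (integral {x..y} (\<lambda>t. \<psi>' (h x) * G t) - integral {x..y} (\<lambda>t. \<psi>' (h t) * G t))"
        unfolding D_def e1[symmetric] by simp
      then show ?thesis using T1 T2 by linarith
    qed
    have "\<bar>D a b\<bar> \<le> 2 * L * \<eta> * W0 a b"
    proof (rule additive_local_global[where D=D and W="\<lambda>x y. 2 * L * \<eta> * W0 x y" and \<delta>=\<delta>])
      fix x y z assume "a \<le> x" "x \<le> y" "y \<le> z" "z \<le> b"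
      then have "D x z = D x y + D y z \<and> W0 x z = W0 x y + W0 y z" by (rule add)
      then show "D x z = D x y + D y z \<and> 2 * L * \<eta> * W0 x z = 2 * L * \<eta> * W0 x y + 2 * L * \<eta> * W0 y z"
        by (simp add: distrib_left)
    next
      fix x y assume "a \<le> x" "x \<le> y" "y \<le> b" "y - x < \<delta>"
      then show "\<bar>D x y\<bar> \<le> 2 * L * \<eta> * W0 x y" by (rule loc)
    qed (use \<delta> ab in auto)
    also have "\<dots> \<le> e"
    proof -
      have nz: "2 * (L + 1) * (W0 a b + 1) \<noteq> 0" using L0 W0ab by auto
      have eq: "\<eta> * (2 * (L + 1) * (W0 a b + 1)) = e" unfolding \<eta>_def using nz by simp
      have m: "2 * L * W0 a b \<le> 2 * (L + 1) * (W0 a b + 1)" using L0 W0ab by (simp add: algebra_simps)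
      have "2 * L * \<eta> * W0 a b = \<eta> * (2 * L * W0 a b)" by (simp add: algebra_simps)
      also have "\<dots> \<le> \<eta> * (2 * (L + 1) * (W0 a b + 1))" using m \<eta>pos by (intro mult_left_mono) auto
      also have "\<dots> = e" by (rule eq)
      finally show ?thesis by simp
    qed
    finally show ?thesis .
  qed
  have "D a b = 0"
  proof -
    have "\<bar>D a b\<bar> \<le> 0"
    proof (rule field_le_epsilon)
      fix e :: real assume "0 < e" then show "\<bar>D a b\<bar> \<le> 0 + e" using key by simp
    qed
    then show ?thesis by simp
  qed
  then show ?thesis by (simp add: D_def)
qed


lemma exp_neg_lip:
  fixes c x y :: real
  assumes "0 \<le> c" "0 \<le> x" "0 \<le> y"
  shows "\<bar>exp (- (c * x)) - exp (- (c * y))\<bar> \<le> c * \<bar>x - y\<bar>"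
proof -
  have aux: "\<bar>exp (- (c * x)) - exp (- (c * y))\<bar> \<le> c * \<bar>x - y\<bar>" if xy: "x \<le> y" "0 \<le> x" for x y
  proof -
    have "exp (- (c * y)) = exp (- (c * x)) * exp (- (c * (y - x)))"
      by (simp add: exp_add[symmetric] algebra_simps)
    moreover have "exp (- (c * (y - x))) \<le> 1" using xy assms(1) by simp
    moreover have "1 - c * (y - x) \<le> exp (- (c * (y - x)))"
      using exp_ge_add_one_self[of "- (c * (y - x))"] by simp
    moreover have "exp (- (c * x)) \<le> 1" using xy assms(1) by simp
    moreover have "0 < exp (- (c * x))" by simp
    ultimately have "0 \<le> exp (- (c * x)) - exp (- (c * y))"
      and "exp (- (c * x)) - exp (- (c * y)) = exp (- (c * x)) * (1 - exp (- (c * (y - x))))"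
      by (auto simp: algebra_simps mult_le_cancel_left1)
    moreover have "exp (- (c * x)) * (1 - exp (- (c * (y - x)))) \<le> 1 * (c * (y - x))"
      using \<open>exp (- (c * x)) \<le> 1\<close> \<open>1 - c * (y - x) \<le> exp (- (c * (y - x)))\<close>
        \<open>exp (- (c * (y - x))) \<le> 1\<close> xy assms(1)
      by (intro mult_mono) auto
    ultimately show ?thesis using xy by simp
  qed
  show ?thesis
  proof (cases "x \<le> y")
    case True then show ?thesis using aux assms by auto
  next
    case False then show ?thesis using aux[of y x] assms by (auto simp: abs_minus_commute)
  qed
qed

lemma exp_seq_zero:
  fixes h :: real assumes "h > 0"
  shows "(\<lambda>k. exp (- ((real k + 1) * h))) \<longlonglongrightarrow> 0"
proof -
  have e: "exp (- ((real k + 1) * h)) = exp (- h) ^ Suc k" for k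
  proof -
    have "exp (- ((real k + 1) * h)) = exp (real (Suc k) * (- h))" by (simp add: algebra_simps)
    also have "\<dots> = exp (- h) ^ Suc k" by (rule exp_of_nat_mult)
    finally show ?thesis .
  qed
  have "(\<lambda>k. exp (- h) ^ k) \<longlonglongrightarrow> 0"
    using assms by (intro LIMSEQ_power_zero) auto
  then have "(\<lambda>k. exp (- h) ^ Suc k) \<longlonglongrightarrow> 0" by (rule LIMSEQ_Suc)
  then show ?thesis by (simp add: e)
qed

lemma levelset_integral_zero:
  fixes h G :: "real \<Rightarrow> real"
  assumes ab: "a \<le> b"
    and hc: "continuous_on {a..b} h"
    and G: "G absolutely_integrable_on {a..b}"
    and hG: "\<And>x y. a \<le> x \<Longrightarrow> x \<le> y \<Longrightarrow> y \<le> b \<Longrightarrow> h y - h x = integral {x..y} G"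
    and hr: "\<And>t. t \<in> {a..b} \<Longrightarrow> h t \<in> {0..1}"
  shows "integral {a..b} (\<lambda>t. if h t = 0 then G t else 0) = 0"
proof -
  define c where "c k = real k + 1" for k :: nat
  have cpos: "c k > 0" for k by (simp add: c_def)
  define \<psi> where "\<psi> k x = (1 - exp (- (c k * x))) / c k" for k x
  have d: "((\<psi> k) has_real_derivative exp (- (c k * x))) (at x)" for k x
  proof -
    have "((\<lambda>x. (1 - exp (- (c k * x))) / c k) has_real_derivative exp (- (c k * x))) (at x)"
      using cpos[of k] by (auto intro!: derivative_eq_intros simp: field_simps)
    then show ?thesis by (simp add: \<psi>_def [abs_def])
  qed
  have lip: "\<bar>exp (- (c k * x)) - exp (- (c k * y))\<bar> \<le> c k * \<bar>x - y\<bar>"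
    if "x \<in> {0..1}" "y \<in> {0..1}" for k x y
    using exp_neg_lip[of "c k" x y] cpos[of k] that by auto
  have eqk: "\<psi> k (h b) - \<psi> k (h a) = integral {a..b} (\<lambda>t. exp (- (c k * h t)) * G t)" for k
    by (rule chain_rule_ac[OF ab hc G hG hr d lip]) auto
  have \<psi>b: "0 \<le> \<psi> k x \<and> \<psi> k x \<le> 1 / c k" if "0 \<le> x" for k x
  proof -
    have "exp (- (c k * x)) \<le> 1" using that cpos[of k] by simp
    moreover have "0 < exp (- (c k * x))" by simp
    ultimately show ?thesis using cpos[of k] by (auto simp: \<psi>_def divide_simps)
  qed
  have bnd: "\<bar>integral {a..b} (\<lambda>t. exp (- (c k * h t)) * G t)\<bar> \<le> 1 / c k" for k
  proof -
    have "h a \<in> {0..1}" "h b \<in> {0..1}" using hr ab by auto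
    then have "\<bar>\<psi> k (h b) - \<psi> k (h a)\<bar> \<le> 1 / c k" using \<psi>b[of "h a" k] \<psi>b[of "h b" k] by auto
    then show ?thesis using eqk[of k] by simp
  qed
  have lim0: "(\<lambda>k. integral {a..b} (\<lambda>t. exp (- (c k * h t)) * G t)) \<longlonglongrightarrow> 0"
  proof (rule Lim_null_comparison[where g = "\<lambda>k. 1 / c k"])
    show "\<forall>\<^sub>F k in sequentially. norm (integral {a..b} (\<lambda>t. exp (- (c k * h t)) * G t)) \<le> 1 / c k"
      using bnd by simp
    show "(\<lambda>k. 1 / c k) \<longlonglongrightarrow> 0"
      unfolding c_def using LIMSEQ_inverse_real_of_nat by (simp add: inverse_eq_divide add.commute)
  qed
  have Gi: "(\<lambda>t. \<bar>G t\<bar>) integrable_on {a..b}" using G absolutely_integrable_on_def[of _ G] by auto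
  have dc: "(\<lambda>t. if h t = 0 then G t else 0) integrable_on {a..b} \<and>
      (\<lambda>k. integral {a..b} (\<lambda>t. exp (- (c k * h t)) * G t)) \<longlonglongrightarrow> integral {a..b} (\<lambda>t. if h t = 0 then G t else 0)"
  proof (intro conjI)
    have cphi: "continuous_on {a..b} (\<lambda>t. exp (- (c k * h t)))" for k
      using hc by (intro continuous_intros)
    have fi: "(\<lambda>t. exp (- (c k * h t)) * G t) integrable_on {a..b}" for k
      using prod_abs_int[OF cphi G] absolutely_integrable_on_def by blast
    have le: "norm (exp (- (c k * h t)) * G t) \<le> \<bar>G t\<bar>" if "t \<in> {a..b}" for k t
    proof -
      have "exp (- (c k * h t)) \<le> 1" using hr[OF that] cpos[of k] by simp
      then show ?thesis by (simp add: abs_mult mult_left_le_one_le)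
    qed
    have conv: "(\<lambda>k. exp (- (c k * h t)) * G t) \<longlonglongrightarrow> (if h t = 0 then G t else 0)" if "t \<in> {a..b}" for t
    proof (cases "h t = 0")
      case True then show ?thesis by simp
    next
      case False
      then have "h t > 0" using hr[OF that] by auto
      then have "(\<lambda>k. exp (- ((real k + 1) * h t))) \<longlonglongrightarrow> 0" by (rule exp_seq_zero)
      then have "(\<lambda>k. exp (- (c k * h t)) * G t) \<longlonglongrightarrow> 0 * G t"
        unfolding c_def by (intro tendsto_mult) auto
      then show ?thesis using False by simp
    qed
    show "(\<lambda>t. if h t = 0 then G t else 0) integrable_on {a..b}"
      by (rule dominated_convergence(1)[OF fi Gi le conv])
    show "(\<lambda>k. integral {a..b} (\<lambda>t. exp (- (c k * h t)) * G t)) \<longlonglongrightarrow> integral {a..b} (\<lambda>t. if h t = 0 then G t else 0)"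
      by (rule dominated_convergence(2)[OF fi Gi le conv])
  qed
  then show ?thesis using lim0 LIMSEQ_unique by blast
qed


lemma ae_zero_from_tails:
  fixes f :: "real \<Rightarrow> real"
  assumes f: "integrable lborel f"
    and z: "\<And>x. set_lebesgue_integral lborel {x<..} f = 0"
  shows "AE x in lborel. f x = 0"
proof -
  have fm[measurable]: "f \<in> borel_measurable lborel" using f by auto
  define P where "P x = max 0 (f x)" for x
  define N where "N x = max 0 (- f x)" for x
  have Pm[measurable]: "P \<in> borel_measurable lborel" unfolding P_def by measurable
  have Nm[measurable]: "N \<in> borel_measurable lborel" unfolding N_def by measurable
  have Pi: "integrable lborel (\<lambda>t. P t * indicator {x<..} t)" for x :: real
  proof -
    have "integrable lborel P" unfolding P_def using f by (intro integrable_max) auto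
    then have "integrable lborel (\<lambda>t. indicator {x<..} t *\<^sub>R P t)"
      by (intro integrable_mult_indicator) auto
    then show ?thesis by (simp add: mult.commute)
  qed
  have Ni: "integrable lborel (\<lambda>t. N t * indicator {x<..} t)" for x :: real
  proof -
    have "integrable lborel N" unfolding N_def using f by (intro integrable_max) auto
    then have "integrable lborel (\<lambda>t. indicator {x<..} t *\<^sub>R N t)"
      by (intro integrable_mult_indicator) auto
    then show ?thesis by (simp add: mult.commute)
  qed
  have PN: "(\<integral>t. P t * indicator {x<..} t \<partial>lborel) = (\<integral>t. N t * indicator {x<..} t \<partial>lborel)" for x
  proof -
    have "(\<integral>t. P t * indicator {x<..} t \<partial>lborel) - (\<integral>t. N t * indicator {x<..} t \<partial>lborel)
          = (\<integral>t. P t * indicator {x<..} t - N t * indicator {x<..} t \<partial>lborel)"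
      using Pi Ni by simp
    also have "\<dots> = (\<integral>t. indicator {x<..} t *\<^sub>R f t \<partial>lborel)"
      by (rule Bochner_Integration.integral_cong) (auto simp: P_def N_def indicator_def max_def)
    also have "\<dots> = 0" using z[of x] by (simp add: set_lebesgue_integral_def)
    finally show ?thesis by simp
  qed
  define M1 where "M1 = density lborel (\<lambda>x. ennreal (P x))"
  define M2 where "M2 = density lborel (\<lambda>x. ennreal (N x))"
  have e1: "emeasure M1 {x<..} = ennreal (\<integral>t. P t * indicator {x<..} t \<partial>lborel)" for x
  proof -
    have "emeasure M1 {x<..} = (\<integral>\<^sup>+ t. ennreal (P t) * indicator {x<..} t \<partial>lborel)"
      unfolding M1_def by (rule emeasure_density) auto
    also have "\<dots> = (\<integral>\<^sup>+ t. ennreal (P t * indicator {x<..} t) \<partial>lborel)"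
      by (intro nn_integral_cong) (auto simp: indicator_def)
    also have "\<dots> = ennreal (\<integral>t. P t * indicator {x<..} t \<partial>lborel)"
      using Pi by (intro nn_integral_eq_integral) (auto simp: P_def indicator_def)
    finally show ?thesis .
  qed
  have e2: "emeasure M2 {x<..} = ennreal (\<integral>t. N t * indicator {x<..} t \<partial>lborel)" for x
  proof -
    have "emeasure M2 {x<..} = (\<integral>\<^sup>+ t. ennreal (N t) * indicator {x<..} t \<partial>lborel)"
      unfolding M2_def by (rule emeasure_density) auto
    also have "\<dots> = (\<integral>\<^sup>+ t. ennreal (N t * indicator {x<..} t) \<partial>lborel)"
      by (intro nn_integral_cong) (auto simp: indicator_def)
    also have "\<dots> = ennreal (\<integral>t. N t * indicator {x<..} t \<partial>lborel)"
      using Ni by (intro nn_integral_eq_integral) (auto simp: N_def indicator_def)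
    finally show ?thesis .
  qed
  have "M1 = M2"
  proof (rule measure_eqI_lessThan)
    show "sets M1 = sets borel" "sets M2 = sets borel" by (auto simp: M1_def M2_def)
    show "emeasure M1 {x<..} < \<infinity>" for x using e1 by simp
    show "emeasure M1 {x<..} = emeasure M2 {x<..}" for x using e1 e2 PN by simp
  qed
  then have "AE x in lborel. ennreal (P x) = ennreal (N x)"
    unfolding M1_def M2_def by (intro sigma_finite_measure.density_unique[OF sigma_finite_lborel]) auto
  then show ?thesis
  proof (rule AE_mp, intro AE_I2 impI)
    fix x assume "ennreal (P x) = ennreal (N x)"
    then have "P x = N x" by (simp add: P_def N_def)
    then show "f x = 0" by (auto simp: P_def N_def max_def split: if_splits)
  qed
qed


lemma mass_eq: "mass w r x = (\<Sum>j\<in>UNIV. x$j * deg w j powr r)"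
  by (simp add: mass_def innerV_def)

lemma pointwise_bound:
  fixes w :: "'n::finite \<Rightarrow> 'n \<Rightarrow> real" and u v \<beta> :: "real^'n"
  assumes sym: "\<forall>i j. w i j = w j i" and nn: "\<forall>i j. 0 \<le> w i j"
    and eps: "0 < \<epsilon>"
    and u: "u \<in> V01"
    and \<beta>: "\<beta> \<in> obstB u"
    and eq: "\<epsilon> *\<^sub>R v + \<epsilon> *\<^sub>R graph_laplacian w r u - u + avg w r u *\<^sub>R (\<chi> i. 1)
             = \<beta> - avg w r \<beta> *\<^sub>R (\<chi> i. 1)"
    and bd: "\<And>j. u$j = 0 \<or> u$j = 1 \<Longrightarrow> v$j = 0"
    and di: "deg w i > 0"
  shows "\<bar>v$i\<bar> \<le> 2 * (\<epsilon> * (\<Sum>j\<in>UNIV. deg w j / deg w j powr r) + 2) / \<epsilon>"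
proof -
  define p where "p j = deg w j powr r" for j
  define K where "K = \<epsilon> * (\<Sum>j\<in>UNIV. deg w j / deg w j powr r) + 2"
  define L where "L j = (\<Sum>k\<in>UNIV. w j k * (u$j - u$k))" for j
  define ub where "ub = avg w r u"
  define bb where "bb = avg w r \<beta>"
  have deg0: "0 \<le> deg w j" for j unfolding deg_def using nn by (simp add: sum_nonneg)
  have p0: "0 \<le> p j" for j by (simp add: p_def)
  have ppos: "0 < p j \<longleftrightarrow> 0 < deg w j" for j using deg0[of j] by (auto simp: p_def)
  have u01: "0 \<le> u$j" "u$j \<le> 1" for j using u by (auto simp: V01_def)
  define D where "D j = L j / p j" for j
  have lap: "graph_laplacian w r u $ j = D j" for j
    by (simp add: graph_laplacian_def L_def p_def D_def)
  have comp: "\<epsilon> * v$j = - \<epsilon> * D j + u$j - ub + \<beta>$j - bb" for j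
  proof -
    have "(\<epsilon> *\<^sub>R v + \<epsilon> *\<^sub>R graph_laplacian w r u - u + avg w r u *\<^sub>R (\<chi> i. 1))$j
          = (\<beta> - avg w r \<beta> *\<^sub>R (\<chi> i. 1))$j" using eq by simp
    then show ?thesis by (simp add: lap ub_def bb_def algebra_simps)
  qed
  have m1pos: "0 < (\<Sum>j\<in>UNIV. p j)"
  proof -
    have "p i \<le> (\<Sum>j\<in>UNIV. p j)" by (rule member_le_sum) (auto simp: p0)
    moreover have "0 < p i" using ppos di by simp
    ultimately show ?thesis by simp
  qed
  have avg_eq: "avg w r x * (\<Sum>j\<in>UNIV. p j) = (\<Sum>j\<in>UNIV. x$j * p j)" for x :: "real^'n"
    using m1pos by (simp add: avg_def mass_eq p_def)
  have ub01: "0 \<le> ub \<and> ub \<le> 1"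
  proof -
    have "ub * (\<Sum>j\<in>UNIV. p j) = (\<Sum>j\<in>UNIV. u$j * p j)" using avg_eq[of u] by (simp add: ub_def)
    moreover have "(\<Sum>j\<in>UNIV. u$j * p j) \<le> (\<Sum>j\<in>UNIV. p j)"
      by (intro sum_mono) (use u01 p0 in \<open>simp add: mult_left_le_one_le\<close>)
    moreover have "0 \<le> (\<Sum>j\<in>UNIV. u$j * p j)"
      by (intro sum_nonneg) (use u01 p0 in simp)
    ultimately have "ub = (\<Sum>j\<in>UNIV. u$j * p j) / (\<Sum>j\<in>UNIV. p j)"
      and "(\<Sum>j\<in>UNIV. u$j * p j) \<le> (\<Sum>j\<in>UNIV. p j)" and "0 \<le> (\<Sum>j\<in>UNIV. u$j * p j)"
      using m1pos by (auto simp: eq_divide_eq)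
    then show ?thesis using m1pos by (simp add: divide_le_eq_1)
  qed
  have Lzero: "p j * D j = L j" for j
  proof (cases "p j = 0")
    case True
    then have "deg w j = 0" using ppos[of j] deg0[of j] by auto
    then have "\<forall>k\<in>UNIV. w j k = 0" unfolding deg_def using nn by (subst sum_nonneg_eq_0_iff[symmetric]) auto
    then have "L j = 0" by (simp add: L_def)
    then show ?thesis by (simp add: D_def)
  next
    case False then show ?thesis by (simp add: D_def)
  qed
  have sumL: "(\<Sum>j\<in>UNIV. L j) = 0"
  proof -
    have "(\<Sum>j\<in>UNIV. L j) = (\<Sum>j\<in>UNIV. \<Sum>k\<in>UNIV. w j k * u$j) - (\<Sum>j\<in>UNIV. \<Sum>k\<in>UNIV. w j k * u$k)"
      by (simp add: L_def algebra_simps sum_subtractf)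
    also have "(\<Sum>j\<in>UNIV. \<Sum>k\<in>UNIV. w j k * u$k) = (\<Sum>k\<in>UNIV. \<Sum>j\<in>UNIV. w j k * u$k)"
      by (rule sum.swap)
    also have "\<dots> = (\<Sum>k\<in>UNIV. \<Sum>j\<in>UNIV. w k j * u$k)" using sym by simp
    finally show ?thesis by simp
  qed
  have massv: "(\<Sum>j\<in>UNIV. p j * v$j) = 0"
  proof -
    have "\<epsilon> * (\<Sum>j\<in>UNIV. p j * v$j) = (\<Sum>j\<in>UNIV. p j * (\<epsilon> * v$j))"
      by (simp add: sum_distrib_left algebra_simps)
    also have "\<dots> = (\<Sum>j\<in>UNIV. - \<epsilon> * (p j * D j) + (u$j * p j - ub * p j) + (\<beta>$j * p j - bb * p j))"
      by (simp add: comp algebra_simps)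
    also have "\<dots> = - \<epsilon> * (\<Sum>j\<in>UNIV. L j) + ((\<Sum>j\<in>UNIV. u$j * p j) - ub * (\<Sum>j\<in>UNIV. p j))
                    + ((\<Sum>j\<in>UNIV. \<beta>$j * p j) - bb * (\<Sum>j\<in>UNIV. p j))"
      by (simp add: Lzero sum.distrib sum_subtractf sum_distrib_left sum_negf)
    also have "\<dots> = 0" using avg_eq[of u] avg_eq[of \<beta>] sumL by (simp add: ub_def bb_def)
    finally show ?thesis using eps by simp
  qed
  define Q where "Q = {j. 0 < p j \<and> 0 < u$j \<and> u$j < 1}"
  have notQ: "p j * v$j = 0" if "j \<notin> Q" for j
  proof (cases "p j = 0")
    case False
    then have "0 < p j" using p0[of j] by simp
    then have "u$j = 0 \<or> u$j = 1" using that u01[of j] by (auto simp: Q_def)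
    then show ?thesis using bd by simp
  qed simp
  have inQ: "\<epsilon> * v$j = - \<epsilon> * D j + u$j - ub - bb" if "j \<in> Q" for j
  proof -
    have "\<beta>$j = 0" using \<beta> that by (auto simp: obstB_def Q_def)
    then show ?thesis using comp[of j] by simp
  qed
  define F where "F j = - \<epsilon> * D j + u$j - ub" for j
  have Fb: "\<bar>F j\<bar> \<le> K" if "0 < p j" for j
  proof -
    have "\<bar>L j\<bar> \<le> (\<Sum>k\<in>UNIV. \<bar>w j k * (u$j - u$k)\<bar>)" unfolding L_def by (rule sum_abs)
    also have "\<dots> \<le> (\<Sum>k\<in>UNIV. w j k)"
    proof (intro sum_mono)
      fix k
      have "\<bar>u$j - u$k\<bar> \<le> 1" using u01[of j] u01[of k] by auto
      then show "\<bar>w j k * (u$j - u$k)\<bar> \<le> w j k"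
        using nn mult_left_mono[of "\<bar>u$j - u$k\<bar>" 1 "w j k"] by (simp add: abs_mult)
    qed
    finally have "\<bar>L j\<bar> \<le> deg w j" by (simp add: deg_def)
    then have "\<bar>L j / p j\<bar> \<le> deg w j / p j" using that by (simp add: divide_right_mono)
    also have "\<dots> \<le> (\<Sum>j\<in>UNIV. deg w j / deg w j powr r)"
      unfolding p_def by (rule member_le_sum) (auto simp: deg0)
    finally have "\<bar>L j / p j\<bar> \<le> (\<Sum>j\<in>UNIV. deg w j / deg w j powr r)" .
    then have "\<bar>\<epsilon> * D j\<bar> \<le> \<epsilon> * (\<Sum>j\<in>UNIV. deg w j / deg w j powr r)"
      using eps mult_left_mono[of "\<bar>L j / p j\<bar>" _ \<epsilon>] by (simp add: abs_mult D_def)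
    then show ?thesis using u01[of j] ub01 unfolding F_def K_def by (simp add: abs_le_iff)
  qed
  have K0: "0 \<le> K"
  proof -
    have "0 \<le> (\<Sum>j\<in>UNIV. deg w j / deg w j powr r)" by (intro sum_nonneg) (simp add: deg0)
    then show ?thesis using eps by (simp add: K_def)
  qed
  show ?thesis
  proof (cases "i \<in> Q")
    case False
    then have "p i * v$i = 0" by (rule notQ)
    moreover have "0 < p i" using ppos di by simp
    ultimately have "v$i = 0" by simp
    then show ?thesis using K0 eps by (simp add: K_def[symmetric])
  next
    case True
    have fQ: "finite Q" by simp
    have "(\<Sum>j\<in>UNIV. p j * v$j) = (\<Sum>j\<in>Q. p j * v$j)"
      by (rule sum.mono_neutral_right) (use notQ in auto)
    then have sQ: "(\<Sum>j\<in>Q. p j * v$j) = 0" using massv by simp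
    have "(\<Sum>j\<in>Q. p j * (\<epsilon> * v$j)) = (\<Sum>j\<in>Q. p j * F j) - bb * (\<Sum>j\<in>Q. p j)"
    proof -
      have "(\<Sum>j\<in>Q. p j * (\<epsilon> * v$j)) = (\<Sum>j\<in>Q. p j * F j - bb * p j)"
        by (rule sum.cong) (auto simp: inQ F_def algebra_simps)
      also have "\<dots> = (\<Sum>j\<in>Q. p j * F j) - bb * (\<Sum>j\<in>Q. p j)"
        by (simp add: sum_subtractf sum_distrib_left)
      finally show ?thesis .
    qed
    moreover have "(\<Sum>j\<in>Q. p j * (\<epsilon> * v$j)) = \<epsilon> * (\<Sum>j\<in>Q. p j * v$j)"
      by (simp add: sum_distrib_left algebra_simps)
    ultimately have bbeq: "bb * (\<Sum>j\<in>Q. p j) = (\<Sum>j\<in>Q. p j * F j)" using sQ by simp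
    have PQ: "0 < (\<Sum>j\<in>Q. p j)"
    proof -
      have "p i \<le> (\<Sum>j\<in>Q. p j)" by (rule member_le_sum) (use True p0 in auto)
      moreover have "0 < p i" using True by (simp add: Q_def)
      ultimately show ?thesis by simp
    qed
    have "\<bar>bb\<bar> * (\<Sum>j\<in>Q. p j) = \<bar>\<Sum>j\<in>Q. p j * F j\<bar>" using bbeq PQ by (metis abs_mult abs_of_pos)
    also have "\<dots> \<le> (\<Sum>j\<in>Q. \<bar>p j * F j\<bar>)" by (rule sum_abs)
    also have "\<dots> \<le> (\<Sum>j\<in>Q. p j * K)"
    proof (intro sum_mono)
      fix j assume "j \<in> Q"
      then have "0 < p j" by (simp add: Q_def)
      then show "\<bar>p j * F j\<bar> \<le> p j * K" using Fb[of j] by (simp add: abs_mult)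
    qed
    also have "\<dots> = K * (\<Sum>j\<in>Q. p j)" by (simp add: sum_distrib_left mult.commute)
    finally have bbK: "\<bar>bb\<bar> \<le> K" using PQ by simp
    have "\<epsilon> * \<bar>v$i\<bar> = \<bar>\<epsilon> * v$i\<bar>" using eps by (simp add: abs_mult)
    also have "\<dots> = \<bar>F i - bb\<bar>" using inQ[OF True] by (simp add: F_def)
    also have "\<dots> \<le> 2 * K" using Fb[of i] True bbK by (simp add: Q_def)
    finally have "\<epsilon> * \<bar>v$i\<bar> \<le> 2 * K" .
    then have "\<bar>v$i\<bar> \<le> 2 * K / \<epsilon>" using eps by (simp add: field_simps)
    then show ?thesis by (simp add: K_def)
  qed
qed


lemma ae_zero_from_tails2:
  fixes f :: "real \<Rightarrow> real"
  assumes f: "integrable lborel f"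
    and z: "\<And>x. set_lebesgue_integral lborel {x..} f = 0"
  shows "AE x in lborel. f x = 0"
proof (rule ae_zero_from_tails[OF f])
  fix x :: real
  have fm[measurable]: "f \<in> borel_measurable lborel" using f by auto
  have "set_lebesgue_integral lborel {x..} f = set_lebesgue_integral lborel {x<..} f"
  proof (rule set_integral_cong_set)
    show "set_borel_measurable lborel {x<..} f" "set_borel_measurable lborel {x..} f"
      unfolding set_borel_measurable_def by measurable
    show "AE t in lborel. (t \<in> {x<..}) = (t \<in> {x..})"
      using AE_lborel_singleton[of x] by eventually_elim auto
  qed
  then show "set_lebesgue_integral lborel {x<..} f = 0" using z[of x] by simp
qed

lemma comp_facts:
  fixes u u' :: "real \<Rightarrow> real^'n::finite"
  assumes ui: "\<And>T. T \<ge> 0 \<Longrightarrow> set_integrable lborel {0..T} u'"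
    and rep: "\<And>t. t \<ge> 0 \<Longrightarrow> u t = u 0 + set_lebesgue_integral lborel {0..t} u'"
  shows "\<And>T. set_integrable lborel {0..T} (\<lambda>t. u' t $ i)"
    and "\<And>x y. 0 \<le> x \<Longrightarrow> x \<le> y \<Longrightarrow> u y $ i - u x $ i = integral {x..y} (\<lambda>t. u' t $ i)"
proof -
  show si: "set_integrable lborel {0..T} (\<lambda>t. u' t $ i)" for T
  proof (cases "T \<ge> 0")
    case True
    have "integrable lborel (\<lambda>t. indicator {0..T} t *\<^sub>R u' t)"
      using ui[OF True] by (simp add: set_integrable_def)
    then have "integrable lborel (\<lambda>t. (indicator {0..T} t *\<^sub>R u' t) $ i)"
      by (intro integrable_bounded_linear[where T="\<lambda>x. x $ i"]) auto
    then show ?thesis by (simp add: set_integrable_def)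
  next
    case False
    then have "{0..T} = {}" by auto
    then show ?thesis by (simp add: set_integrable_def)
  qed
  have rep': "u t $ i = u 0 $ i + integral {0..t} (\<lambda>s. u' s $ i)" if "t \<ge> 0" for t
  proof -
    have "u' integrable_on {0..t}" using set_borel_integral_eq_integral(1)[OF ui[OF that]] .
    moreover have "set_lebesgue_integral lborel {0..t} u' = integral {0..t} u'"
      using set_borel_integral_eq_integral(2)[OF ui[OF that]] .
    ultimately show ?thesis using rep[OF that] by simp
  qed
  fix x y :: real assume xy: "0 \<le> x" "x \<le> y"
  have Gi: "(\<lambda>s. u' s $ i) integrable_on {0..y}" using set_borel_integral_eq_integral(1)[OF si] .
  have "integral {0..x} (\<lambda>s. u' s $ i) + integral {x..y} (\<lambda>s. u' s $ i) = integral {0..y} (\<lambda>s. u' s $ i)"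
    using xy Gi by (intro Henstock_Kurzweil_Integration.integral_combine) auto
  then show "u y $ i - u x $ i = integral {x..y} (\<lambda>t. u' t $ i)"
    using rep'[of x] rep'[of y] xy by simp
qed

lemma ae_level:
  fixes h G :: "real \<Rightarrow> real"
  assumes hc: "continuous_on {0..} h"
    and hr: "\<And>t. t \<ge> 0 \<Longrightarrow> h t \<in> {0..1}"
    and Gi: "\<And>T. set_integrable lborel {0..T} G"
    and hG: "\<And>x y. 0 \<le> x \<Longrightarrow> x \<le> y \<Longrightarrow> h y - h x = integral {x..y} G"
  shows "AE t in lborel. t \<ge> 0 \<longrightarrow> h t = 0 \<longrightarrow> G t = 0"
proof -
  have Gabs: "G absolutely_integrable_on {0..T}" for T
  proof -
    have "G integrable_on {0..T}" using set_borel_integral_eq_integral(1)[OF Gi] .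
    moreover have "set_integrable lborel {0..T} (\<lambda>t. norm (G t))"
      using Gi[of T] by (rule set_integrable_norm)
    then have "(\<lambda>t. norm (G t)) integrable_on {0..T}" using set_borel_integral_eq_integral(1) by blast
    ultimately show ?thesis using absolutely_integrable_on_def by blast
  qed
  define C where "C T = {t \<in> {0..T}. h t = 0}" for T :: real
  have Cc: "closed (C T)" for T
  proof -
    have "continuous_on {0..T} h" using hc by (rule continuous_on_subset) auto
    then show ?thesis unfolding C_def by (rule continuous_closed_preimage_constant) auto
  qed
  define f where "f n t = indicator (C (real n)) t * (indicator {0..real n} t * G t)" for n :: nat and t
  have fAE: "AE t in lborel. f n t = 0" for n
  proof -
    define T where "T = real n"
    have T0: "0 \<le> T" by (simp add: T_def)
    have I1: "integrable lborel (\<lambda>t. indicator {0..T} t * G t)"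
      using Gi[of T] by (simp add: set_integrable_def)
    have Cs: "C T \<in> sets lborel" using Cc[of T] by (simp add: borel_closed)
    have If: "integrable lborel (f n)"
    proof -
      have "integrable lborel (\<lambda>t. indicator (C T) t *\<^sub>R (indicator {0..T} t * G t))"
        using Cs I1 by (intro integrable_mult_indicator) auto
      then show ?thesis by (simp add: f_def[abs_def] T_def)
    qed
    show ?thesis
    proof (rule ae_zero_from_tails2[OF If])
      fix x :: real
      have si: "set_integrable lborel {x..} (f n)"
        unfolding set_integrable_def using If by (intro integrable_mult_indicator) auto
      have "set_lebesgue_integral lborel {x..} (f n) = integral {x..} (f n)"
        using set_borel_integral_eq_integral(2)[OF si] .
      also have "integral {x..} (f n) = integral {x..} (\<lambda>t. if t \<in> {0..T} then (if h t = 0 then G t else 0) else 0)"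
        by (rule arg_cong[where f="integral {x..}"]) (auto simp: fun_eq_iff f_def C_def T_def indicator_def)
      also have "\<dots> = integral ({0..T} \<inter> {x..}) (\<lambda>t. if h t = 0 then G t else 0)"
        by (rule integral_restrict_Int)
      also have "\<dots> = 0"
      proof (cases "x \<le> T")
        case True
        have e: "{0..T} \<inter> {x..} = {max 0 x..T}" by auto
        show ?thesis unfolding e
        proof (rule levelset_integral_zero)
          show "max 0 x \<le> T" using True T0 by simp
          show "continuous_on {max 0 x..T} h" using hc by (rule continuous_on_subset) auto
          show "G absolutely_integrable_on {max 0 x..T}"
            using absolutely_integrable_on_subinterval[OF Gabs[of T]] by auto
          show "h b - h a = integral {a..b} G" if "max 0 x \<le> a" "a \<le> b" "b \<le> T" for a b
            using hG that by auto
          show "h t \<in> {0..1}" if "t \<in> {max 0 x..T}" for t using hr that by auto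
        qed
      next
        case False
        then have "{0..T} \<inter> {x..} = {}" by auto
        then show ?thesis by simp
      qed
      finally show "set_lebesgue_integral lborel {x..} (f n) = 0" .
    qed
  qed
  then have "AE t in lborel. \<forall>n. f n t = 0" by (simp add: AE_all_countable)
  then show ?thesis
  proof (rule AE_mp, intro AE_I2 impI)
    fix t assume A: "\<forall>n. f n t = 0" and t: "0 \<le> t" and h0: "h t = 0"
    define n where "n = nat \<lceil>t\<rceil>"
    have "t \<le> real n" unfolding n_def by linarith
    then have "f n t = G t" using t h0 by (simp add: f_def C_def indicator_def)
    then show "G t = 0" using A by simp
  qed
qed


theorem theorem47:
  fixes w :: "'n::finite \<Rightarrow> 'n \<Rightarrow> real" and r \<epsilon> :: real and u0 :: "real^'n"
    and \<tau> :: "nat \<Rightarrow> real" and U :: "nat \<Rightarrow> nat \<Rightarrow> real^'n"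
    and uhat \<gamma> :: "real \<Rightarrow> real^'n"
  assumes "weighted_graph w" and "0 \<le> r" and "r \<le> 1" and "0 < \<epsilon>"
    and "u0 \<in> V01" and "u0 \<noteq> 0" and "u0 \<noteq> (\<chi> i. 1)"
    and "\<And>n. 0 < \<tau> n" and "\<And>n. \<tau> n < \<epsilon>" and "decseq \<tau>" and "\<tau> \<longlonglongrightarrow> 0"
    and "\<And>n. semi_discrete_iterates w r \<epsilon> (\<tau> n) u0 (U n)"
    and "\<And>t. t \<ge> 0 \<Longrightarrow> (\<lambda>n. U n (nat \<lceil>t / \<tau> n\<rceil>)) \<longlonglongrightarrow> uhat t"
    and "mc_ac_solution w r \<epsilon> uhat \<gamma>"
    and "uhat 0 = u0"
  shows "\<exists>L. \<forall>s\<ge>0. \<forall>t\<ge>0. normV w r (uhat t - uhat s) \<le> L * \<bar>t - s\<bar>"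
proof -
  have sym: "\<forall>i j. w i j = w j i" and nn: "\<forall>i j. 0 \<le> w i j"
    using assms(1) by (auto simp: weighted_graph_def)
  have eps: "0 < \<epsilon>" by fact
  have cont: "continuous_on {0..} uhat" and V: "\<And>t. t \<ge> 0 \<Longrightarrow> uhat t \<in> V01"
    using assms(14) by (auto simp: mc_ac_solution_def)
  have ex: "\<exists>u'. (\<forall>T\<ge>0. set_integrable lborel {0..T} u' \<and>
                   set_integrable lborel {0..T} (\<lambda>t. (norm (u' t))\<^sup>2)) \<and>
           (\<forall>t\<ge>0. uhat t = uhat 0 + set_lebesgue_integral lborel {0..t} u') \<and>
           (AE t in lborel. t \<ge> 0 \<longrightarrow>
               \<epsilon> *\<^sub>R u' t + \<epsilon> *\<^sub>R graph_laplacian w r (uhat t) - uhat t + avg w r (uhat t) *\<^sub>R (\<chi> i. 1)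
                 = \<gamma> t - avg w r (\<gamma> t) *\<^sub>R (\<chi> i. 1)
               \<and> \<gamma> t \<in> obstB (uhat t))"
    using assms(14) unfolding mc_ac_solution_def by (rule conjunct2[OF conjunct2])
  then obtain u' where P: "(\<forall>T\<ge>0. set_integrable lborel {0..T} u' \<and>
                   set_integrable lborel {0..T} (\<lambda>t. (norm (u' t))\<^sup>2)) \<and>
           (\<forall>t\<ge>0. uhat t = uhat 0 + set_lebesgue_integral lborel {0..t} u') \<and>
           (AE t in lborel. t \<ge> 0 \<longrightarrow>
               \<epsilon> *\<^sub>R u' t + \<epsilon> *\<^sub>R graph_laplacian w r (uhat t) - uhat t + avg w r (uhat t) *\<^sub>R (\<chi> i. 1)
                 = \<gamma> t - avg w r (\<gamma> t) *\<^sub>R (\<chi> i. 1)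
               \<and> \<gamma> t \<in> obstB (uhat t))" by (elim exE)
  have ui0: "\<forall>T\<ge>0. set_integrable lborel {0..T} u' \<and>
                   set_integrable lborel {0..T} (\<lambda>t. (norm (u' t))\<^sup>2)" using P by (rule conjunct1)
  have rep0: "\<forall>t\<ge>0. uhat t = uhat 0 + set_lebesgue_integral lborel {0..t} u'"
    using P by (rule conjunct1[OF conjunct2])
  have ui: "\<And>T. T \<ge> 0 \<Longrightarrow> set_integrable lborel {0..T} u'"
    using ui0 by blast
  have rep: "\<And>t. t \<ge> 0 \<Longrightarrow> uhat t = uhat 0 + set_lebesgue_integral lborel {0..t} u'"
    by (rule rep0[rule_format])
  have AEeq: "AE t in lborel. t \<ge> 0 \<longrightarrow>
               \<epsilon> *\<^sub>R u' t + \<epsilon> *\<^sub>R graph_laplacian w r (uhat t) - uhat t + avg w r (uhat t) *\<^sub>R (\<chi> i. 1)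
                 = \<gamma> t - avg w r (\<gamma> t) *\<^sub>R (\<chi> i. 1)
               \<and> \<gamma> t \<in> obstB (uhat t)" using P by (rule conjunct2[OF conjunct2])
  have CF1: "set_integrable lborel {0..T} (\<lambda>t. u' t $ i)" for T i
    by (rule comp_facts(1)[where u=uhat and u'=u']) (fact ui, fact rep)
  have CF2: "uhat y $ i - uhat x $ i = integral {x..y} (\<lambda>t. u' t $ i)" if "0 \<le> x" "x \<le> y" for x y i
    by (rule comp_facts(2)[where u=uhat and u'=u']) (fact ui, fact rep, fact that(1), fact that(2))
  have hr: "uhat t $ i \<in> {0..1}" if "t \<ge> 0" for t i using V[OF that] by (auto simp: V01_def)
  have hc: "continuous_on {0..} (\<lambda>t. uhat t $ i)" for i using cont by (intro continuous_intros)
  have AE0: "AE t in lborel. t \<ge> 0 \<longrightarrow> uhat t $ i = 0 \<longrightarrow> u' t $ i = 0" for i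
    by (rule ae_level[OF hc hr CF1 CF2]) auto
  have AE1: "AE t in lborel. t \<ge> 0 \<longrightarrow> 1 - uhat t $ i = 0 \<longrightarrow> - (u' t $ i) = 0" for i
  proof (rule ae_level)
    show "continuous_on {0..} (\<lambda>t. 1 - uhat t $ i)" using cont by (intro continuous_intros)
    show "1 - uhat t $ i \<in> {0..1}" if "t \<ge> 0" for t using hr[OF that, of i] by auto
    show "set_integrable lborel {0..T} (\<lambda>t. - (u' t $ i))" for T
      using CF1[of T i] by (simp add: set_integrable_def)
    show "(1 - uhat y $ i) - (1 - uhat x $ i) = integral {x..y} (\<lambda>t. - (u' t $ i))"
      if "0 \<le> x" "x \<le> y" for x y
      using CF2[OF that, of i] by simp
  qed
  have AEall: "AE t in lborel. \<forall>i\<in>UNIV. (t \<ge> 0 \<longrightarrow> uhat t $ i = 0 \<longrightarrow> u' t $ i = 0) \<and>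
                 (t \<ge> 0 \<longrightarrow> 1 - uhat t $ i = 0 \<longrightarrow> - (u' t $ i) = 0)"
    by (rule AE_finite_allI) (use AE0 AE1 in auto)
  define Cb where "Cb = 2 * (\<epsilon> * (\<Sum>j\<in>UNIV. deg w j / deg w j powr r) + 2) / \<epsilon>"
  have Cb0: "0 \<le> Cb"
  proof -
    have "0 \<le> deg w j" for j unfolding deg_def using nn by (simp add: sum_nonneg)
    then have "0 \<le> (\<Sum>j\<in>UNIV. deg w j / deg w j powr r)" by (intro sum_nonneg) simp
    then show ?thesis using eps by (simp add: Cb_def)
  qed
  have AEb: "AE t in lborel. t \<ge> 0 \<longrightarrow> (\<forall>i. deg w i > 0 \<longrightarrow> \<bar>u' t $ i\<bar> \<le> Cb)"
    using AEeq AEall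
  proof eventually_elim
    case (elim t)
    show ?case
    proof (intro impI allI)
      fix i assume t: "t \<ge> 0" and di: "deg w i > 0"
      show "\<bar>u' t $ i\<bar> \<le> Cb" unfolding Cb_def
      proof (rule pointwise_bound[OF sym nn eps V[OF t]])
        show "\<gamma> t \<in> obstB (uhat t)" using elim t by auto
        show "\<epsilon> *\<^sub>R u' t + \<epsilon> *\<^sub>R graph_laplacian w r (uhat t) - uhat t + avg w r (uhat t) *\<^sub>R (\<chi> i. 1)
                 = \<gamma> t - avg w r (\<gamma> t) *\<^sub>R (\<chi> i. 1)" using elim t by auto
        show "u' t $ j = 0" if "uhat t $ j = 0 \<or> uhat t $ j = 1" for j
          using elim t that by auto
        show "deg w i > 0" by fact
      qed
    qed
  qed
  have comp_lip: "\<bar>uhat t $ i - uhat s $ i\<bar> \<le> Cb * (t - s)"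
    if st: "0 \<le> s" "s \<le> t" and di: "deg w i > 0" for s t i
  proof -
    have si: "set_integrable lborel {s..t} (\<lambda>x. u' x $ i)"
      by (rule set_integrable_subset[OF CF1[of t i]]) (use st in auto)
    have "uhat t $ i - uhat s $ i = integral {s..t} (\<lambda>x. u' x $ i)" using CF2[OF st] .
    also have "\<dots> = set_lebesgue_integral lborel {s..t} (\<lambda>x. u' x $ i)"
      using set_borel_integral_eq_integral(2)[OF si] by simp
    finally have e: "uhat t $ i - uhat s $ i = set_lebesgue_integral lborel {s..t} (\<lambda>x. u' x $ i)" .
    have "norm (set_lebesgue_integral lborel {s..t} (\<lambda>x. u' x $ i))
          \<le> set_lebesgue_integral lborel {s..t} (\<lambda>x. norm (u' x $ i))"
      by (rule set_integral_norm_bound[OF si])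
    also have "\<dots> \<le> set_lebesgue_integral lborel {s..t} (\<lambda>x. Cb)"
    proof (rule set_integral_mono_AE)
      show "set_integrable lborel {s..t} (\<lambda>x. norm (u' x $ i))" by (rule set_integrable_norm[OF si])
      show "set_integrable lborel {s..t} (\<lambda>x. Cb)"
        unfolding set_integrable_def by (simp add: integrable_indicator_iff emeasure_lborel_Icc_eq)
      show "AE x\<in>{s..t} in lborel. norm (u' x $ i) \<le> Cb"
        using AEb by eventually_elim (use st di in auto)
    qed
    also have "\<dots> = Cb * (t - s)"
      using st by (simp add: set_integral_const)
    finally show ?thesis using e by simp
  qed
  define P where "P = (\<Sum>j\<in>UNIV. deg w j powr r)"
  show ?thesis
  proof (intro exI allI impI)
    fix s t :: real assume s: "0 \<le> s" and t: "0 \<le> t"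
    have cb: "\<bar>(uhat t - uhat s) $ i\<bar> \<le> Cb * \<bar>t - s\<bar>" if "deg w i > 0" for i
    proof (cases "s \<le> t")
      case True then show ?thesis using comp_lip[OF s True that] by simp
    next
      case False
      then show ?thesis using comp_lip[OF t _ that, of s] by (simp add: abs_minus_commute)
    qed
    have "innerV w r (uhat t - uhat s) (uhat t - uhat s)
          \<le> (\<Sum>j\<in>UNIV. (Cb * \<bar>t - s\<bar>)\<^sup>2 * deg w j powr r)"
      unfolding innerV_def
    proof (rule sum_mono)
      fix j
      show "(uhat t - uhat s) $ j * (uhat t - uhat s) $ j * deg w j powr r \<le> (Cb * \<bar>t - s\<bar>)\<^sup>2 * deg w j powr r"
      proof (cases "deg w j = 0")
        case True then show ?thesis by simp
      next
        case False
        have "0 \<le> deg w j" unfolding deg_def using nn by (simp add: sum_nonneg)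
        then have dj: "deg w j > 0" using False by simp
        have ab: "\<bar>(uhat t - uhat s) $ j\<bar> \<le> Cb * \<bar>t - s\<bar>" by (rule cb[OF dj])
        have "((uhat t - uhat s) $ j)\<^sup>2 \<le> (Cb * \<bar>t - s\<bar>)\<^sup>2"
          using power_mono[OF ab abs_ge_zero, of 2] by simp
        then show ?thesis by (simp add: power2_eq_square mult_right_mono)
      qed
    qed
    also have "\<dots> = (Cb * \<bar>t - s\<bar>)\<^sup>2 * P" by (simp add: P_def sum_distrib_left)
    finally have le: "innerV w r (uhat t - uhat s) (uhat t - uhat s) \<le> (Cb * \<bar>t - s\<bar>)\<^sup>2 * P" .
    have "normV w r (uhat t - uhat s) \<le> sqrt ((Cb * \<bar>t - s\<bar>)\<^sup>2 * P)"
      unfolding normV_def using le by (rule real_sqrt_le_mono)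
    also have "\<dots> = (Cb * sqrt P) * \<bar>t - s\<bar>"
      using Cb0 by (simp add: real_sqrt_mult)
    finally show "normV w r (uhat t - uhat s) \<le> (Cb * sqrt P) * \<bar>t - s\<bar>" .
  qed
qed


end
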